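(* Let ${\bm X}^\star={\bm V}^\star{\bm\Sigma}^\star{\bm V}^{\star\top}\in\mathbb{R}^{d\times d}$ where ${\bm V}^\star\in\mathbb{R}^{d\times r}$ has orthonormal columns and ${\bm\Sigma}^\star$ is an $r\times r$ diagonal matrix with positive diagonal entries. Let ${\bm V}_t\in\mathbb{R}^{d\times r}$ have orthonormal columns, let ${\bm U}_t\in\mathbb{R}^{d\times r'}$, and let ${\bm S}_t={\bm V}_t{\bm V}_t^\top{\bm U}_t$. If $\|{\bm V}^\star-{\bm V}_t\|\le0.1$, then $$\big\|({\bm X}^\star-{\bm S}_t{\bm S}_t^\top){\bm V}_t\big\|_{\mathrm F}^2\ge\frac25\big\|{\bm X}^\star-{\bm S}_t{\bm S}_t^\top\big\|_{\mathrm F}^2.$$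
   Context: $\|\cdot\|$ denotes the spectral norm and $\|\cdot\|_{\mathrm F}$ the Frobenius norm. (In the paper, ${\bm U}_t$ is a gradient descent iterate and ${\bm V}_t$ an associated orthonormal matrix; the lemma uses only the stated properties.) *)

theory Defs
  imports "HOL-Analysis.Analysis"
begin

text \<open>Matrices are rendered as real^'c^'r (r rows, c columns), product (**).\<close>

definition frob_norm :: "real^'c^'r \<Rightarrow> real" where
  "frob_norm A = sqrt (\<Sum>i\<in>UNIV. \<Sum>j\<in>UNIV. (A $ i $ j)\<^sup>2)"

definition spec_norm :: "real^'c^'r \<Rightarrow> real" where
  "spec_norm A = onorm (\<lambda>x. A *v x)"

definition orthonormal_cols :: "real^'c^'r \<Rightarrow> bool" where
  "orthonormal_cols V \<longleftrightarrow> transpose V ** V = mat 1"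

definition pos_diag :: "real^'n^'n \<Rightarrow> bool" where
  "pos_diag S \<longleftrightarrow> (\<forall>i j. i \<noteq> j \<longrightarrow> S $ i $ j = 0) \<and> (\<forall>i. S $ i $ i > 0)"

end

theory Submission imports Defs begin

lemma frob2: "(frob_norm A)\<^sup>2 = (\<Sum>i\<in>UNIV. (norm (A $ i))\<^sup>2)"
  unfolding frob_norm_def
  by (simp add: sum_nonneg norm_vec_def L2_set_def)

lemma row_mult: "(A ** B) $ i = (A $ i) v* B"
  by (simp add: matrix_matrix_mult_def vector_matrix_mult_def vec_eq_iff)

lemma frob_transpose: "frob_norm (transpose A) = frob_norm (A::real^'c^'r)"
  unfolding frob_norm_def transpose_def
  by (simp add: sum.swap[of _ "UNIV::'c set"])

lemma mat_ldiff: "((A::real^'n^'m) - B) ** C = A ** C - B ** C"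
  by (simp add: matrix_matrix_mult_def vec_eq_iff sum_subtractf left_diff_distrib)

lemma mat_rdiff: "(A::real^'n^'m) ** (B - C) = A ** B - A ** C"
  by (simp add: matrix_matrix_mult_def vec_eq_iff sum_subtractf right_diff_distrib)

lemma transpose_diff: "transpose ((A::real^'n^'m) - B) = transpose A - transpose B"
  by (simp add: transpose_def vec_eq_iff)

lemma sym_vm: "transpose P = P \<Longrightarrow> x v* P = P *v (x::real^'n)"
  by (metis vector_transpose_matrix)

lemma idem_inner:
  fixes P :: "real^'n^'n"
  assumes s: "transpose P = P" and i: "P ** P = P"
  shows "inner (P *v x) (P *v x) = inner x (P *v x)"
proof -
  have "inner (P *v x) (P *v x) = inner (x v* P) (P *v x)" using sym_vm[OF s] by simp
  also have "\<dots> = inner x (P *v (P *v x))" by (rule dot_lmul_matrix)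
  also have "\<dots> = inner x (P *v x)" by (simp add: matrix_vector_mul_assoc i)
  finally show ?thesis .
qed

lemma pyth:
  fixes P :: "real^'n^'n"
  assumes s: "transpose P = P" and i: "P ** P = P"
  shows "(norm x)\<^sup>2 = (norm (P *v x))\<^sup>2 + (norm ((mat 1 - P) *v x))\<^sup>2"
proof -
  have q: "(mat 1 - P) *v x = x - P *v x" by (simp add: matrix_vector_mult_diff_rdistrib)
  have "(norm x)\<^sup>2 = inner x x" by (simp add: dot_square_norm)
  moreover have "(norm (P *v x))\<^sup>2 = inner x (P *v x)"
    using idem_inner[OF s i] by (simp add: dot_square_norm[symmetric])
  moreover have "(norm (x - P *v x))\<^sup>2 = inner x x - 2 * inner x (P *v x) + inner (P *v x) (P *v x)"
    by (simp add: dot_square_norm[symmetric] inner_diff_left inner_diff_right inner_commute)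
  ultimately show ?thesis using q idem_inner[OF s i] by simp
qed

lemma decomp_rows:
  fixes P :: "real^'n^'n" and A :: "real^'n^'m"
  assumes s: "transpose P = P" and i: "P ** P = P"
  shows "(frob_norm A)\<^sup>2 = (frob_norm (A ** P))\<^sup>2 + (frob_norm (A ** (mat 1 - P)))\<^sup>2"
proof -
  have sq: "transpose (mat 1 - P) = mat 1 - P" using s by (simp add: transpose_diff)
  have r1: "(A ** P) $ j = P *v (A $ j)" for j
    by (simp only: row_mult sym_vm[OF s])
  have r2: "(A ** (mat 1 - P)) $ j = (mat 1 - P) *v (A $ j)" for j
    by (simp only: row_mult sym_vm[OF sq])
  show ?thesis
    unfolding frob2 r1 r2 sum.distrib[symmetric]
    by (rule sum.cong[OF refl]) (rule pyth[OF s i])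
qed

lemma decomp_cols:
  fixes P :: "real^'n^'n" and A :: "real^'m^'n"
  assumes s: "transpose P = P" and i: "P ** P = P"
  shows "(frob_norm A)\<^sup>2 = (frob_norm (P ** A))\<^sup>2 + (frob_norm ((mat 1 - P) ** A))\<^sup>2"
proof -
  have sq: "transpose (mat 1 - P) = mat 1 - P" using s by (simp add: transpose_diff)
  have "(frob_norm (transpose A))\<^sup>2 = (frob_norm (transpose A ** P))\<^sup>2 + (frob_norm (transpose A ** (mat 1 - P)))\<^sup>2"
    by (rule decomp_rows[OF s i])
  moreover have "transpose A ** P = transpose (P ** A)" using s by (simp add: matrix_transpose_mul)
  moreover have "transpose A ** (mat 1 - P) = transpose ((mat 1 - P) ** A)" using sq by (simp add: matrix_transpose_mul)
  ultimately show ?thesis by (simp add: frob_transpose)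
qed

lemma frob2_nonneg: "0 \<le> (frob_norm A)\<^sup>2" by simp

theorem lemma9:
  fixes Vstar Vt :: "real^'r^'d"
    and Sigma :: "real^'r^'r"
    and Ut :: "real^'r2^'d"
    and Xstar St :: "_"
  assumes "orthonormal_cols Vstar"
    and "pos_diag Sigma"
    and "Xstar = Vstar ** Sigma ** transpose Vstar"
    and "orthonormal_cols Vt"
    and "St = Vt ** transpose Vt ** Ut"
    and "spec_norm (Vstar - Vt) \<le> 0.1"
  shows "(frob_norm ((Xstar - St ** transpose St) ** Vt))\<^sup>2
           \<ge> 2/5 * (frob_norm (Xstar - St ** transpose St))\<^sup>2"
proof -
  note oV = assms(1)[unfolded orthonormal_cols_def]
  note oT = assms(4)[unfolded orthonormal_cols_def]
  define P where "P = Vt ** transpose Vt"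
  define Q where "Q = mat 1 - P"
  define M where "M = Xstar - St ** transpose St"
  have Ps: "transpose P = P" unfolding P_def by (simp add: matrix_transpose_mul)
  have Pi: "P ** P = P" unfolding P_def
    by (metis matrix_mul_assoc matrix_mul_rid oT)
  have Qs: "transpose Q = Q" unfolding Q_def using Ps by (simp add: transpose_diff)
  have QP: "Q ** P = 0" unfolding Q_def by (simp add: mat_ldiff Pi)
  have QVt: "Q ** Vt = 0" unfolding Q_def P_def
    by (simp add: mat_ldiff oT flip: matrix_mul_assoc)
  have SigS: "transpose Sigma = Sigma"
    using assms(2) unfolding pos_diag_def transpose_def by (auto simp: vec_eq_iff) metis
  have XS: "transpose Xstar = Xstar"
    unfolding assms(3) by (simp add: matrix_transpose_mul SigS matrix_mul_assoc)
  have St: "St = P ** Ut" unfolding assms(5) P_def ..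
  have QS: "Q ** St = 0" unfolding St by (simp add: matrix_mul_assoc QP)
  have SQ: "transpose St ** Q = 0"
  proof -
    have "transpose St ** Q = transpose (Q ** St)" by (simp add: matrix_transpose_mul Qs)
    thus ?thesis using QS by (simp add: transpose_def vec_eq_iff)
  qed
  have MQ: "M ** Q = Xstar ** Q"
    unfolding M_def by (simp add: mat_ldiff SQ flip: matrix_mul_assoc)
  have QMP: "Q ** M ** P = Q ** Xstar ** P"
    unfolding M_def by (simp add: mat_rdiff mat_ldiff matrix_mul_assoc QS)
  have QMQ: "Q ** (M ** Q) = Q ** Xstar ** Q"
    unfolding MQ by (simp add: matrix_mul_assoc)
  have PMQ: "P ** (M ** Q) = P ** Xstar ** Q"
    unfolding MQ by (simp add: matrix_mul_assoc)
  have PXQ: "frob_norm (P ** Xstar ** Q) = frob_norm (Q ** Xstar ** P)"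
  proof -
    have "transpose (P ** Xstar ** Q) = Q ** Xstar ** P"
      by (simp add: matrix_transpose_mul Ps Qs XS matrix_mul_assoc)
    thus ?thesis by (metis frob_transpose)
  qed
  have key: "99 * (norm (Q *v (Vstar *v c)))\<^sup>2 \<le> (norm (P *v (Vstar *v c)))\<^sup>2" for c
  proof -
    have pv: "(norm y)\<^sup>2 = (norm (P *v y))\<^sup>2 + (norm (Q *v y))\<^sup>2" for y
      unfolding Q_def by (rule pyth[OF Ps Pi])
    have Qle: "norm (Q *v y) \<le> norm y" for y
    proof -
      have "(norm (Q *v y))\<^sup>2 \<le> (norm y)\<^sup>2" using pv[of y] by simp
      thus ?thesis by (simp add: power_mono_iff)
    qed
    have iso: "norm (Vstar *v c) = norm c"
    proof -
      have "inner (Vstar *v c) (Vstar *v c) = inner (c v* transpose Vstar) (Vstar *v c)" by simp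
      also have "\<dots> = inner c (transpose Vstar *v (Vstar *v c))" by (rule dot_lmul_matrix)
      also have "\<dots> = inner c c" by (simp only: matrix_vector_mul_assoc oV matrix_vector_mul_lid)
      finally show ?thesis by (metis norm_eq_sqrt_inner)
    qed
    have e: "Q *v (Vstar *v c) = Q *v ((Vstar - Vt) *v c)"
    proof -
      have "Q *v ((Vstar - Vt) *v c) = (Q ** (Vstar - Vt)) *v c" by (simp add: matrix_vector_mul_assoc)
      also have "\<dots> = (Q ** Vstar) *v c" by (simp add: mat_rdiff QVt)
      finally show ?thesis by (simp add: matrix_vector_mul_assoc)
    qed
    have on: "norm ((Vstar - Vt) *v c) \<le> 0.1 * norm c"
    proof -
      have "norm ((Vstar - Vt) *v c) \<le> spec_norm (Vstar - Vt) * norm c"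
        unfolding spec_norm_def by (rule onorm) simp
      also have "\<dots> \<le> 0.1 * norm c" using assms(6) by (intro mult_right_mono) simp_all
      finally show ?thesis .
    qed
    have "norm (Q *v (Vstar *v c)) \<le> 0.1 * norm (Vstar *v c)"
      using e Qle[of "(Vstar - Vt) *v c"] on iso by simp
    hence "(norm (Q *v (Vstar *v c)))\<^sup>2 \<le> (0.1 * norm (Vstar *v c))\<^sup>2"
      by (intro power_mono) simp_all
    moreover have "(0.1 * norm (Vstar *v c))\<^sup>2 = 1/100 * (norm (Vstar *v c))\<^sup>2"
      by (simp add: power2_eq_square)
    ultimately have "(norm (Q *v (Vstar *v c)))\<^sup>2 \<le> 1/100 * (norm (Vstar *v c))\<^sup>2"
      by linarith
    thus ?thesis using pv[of "Vstar *v c"] by linarith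
  qed
  have rowQX: "(Q ** Xstar) $ i = Vstar *v ((Q $ i) v* (Vstar ** Sigma))" for i
    unfolding assms(3) row_mult by (simp only: vector_matrix_mul_assoc[symmetric] vector_transpose_matrix)
  have cb: "99 * (frob_norm (Q ** Xstar ** Q))\<^sup>2 \<le> (frob_norm (Q ** Xstar ** P))\<^sup>2"
    unfolding frob2 sum_distrib_left row_mult[of "Q ** Xstar"] sym_vm[OF Ps] sym_vm[OF Qs] rowQX
    by (rule sum_mono) (rule key)
  have d1: "(frob_norm M)\<^sup>2 = (frob_norm (M ** P))\<^sup>2 + (frob_norm (M ** Q))\<^sup>2"
    unfolding Q_def by (rule decomp_rows[OF Ps Pi])
  have d2: "(frob_norm (M ** Q))\<^sup>2 = (frob_norm (P ** (M ** Q)))\<^sup>2 + (frob_norm (Q ** (M ** Q)))\<^sup>2"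
    unfolding Q_def by (rule decomp_cols[OF Ps Pi])
  have d3: "(frob_norm (M ** P))\<^sup>2 = (frob_norm (P ** (M ** P)))\<^sup>2 + (frob_norm (Q ** (M ** P)))\<^sup>2"
    unfolding Q_def by (rule decomp_cols[OF Ps Pi])
  have MV: "(frob_norm (M ** Vt))\<^sup>2 = (frob_norm (M ** P))\<^sup>2"
  proof -
    have "(norm (m v* Vt))\<^sup>2 = (norm (m v* P))\<^sup>2" for m
    proof -
      have "inner (m v* Vt) (m v* Vt) = inner m (Vt *v (m v* Vt))" by (rule dot_lmul_matrix)
      also have "\<dots> = inner m (P *v m)"
        unfolding P_def by (simp only: transpose_matrix_vector[symmetric] matrix_vector_mul_assoc)
      also have "\<dots> = inner (m v* P) (m v* P)"
        using idem_inner[OF Ps Pi, of m] sym_vm[OF Ps] by simp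
      finally show ?thesis by (simp add: dot_square_norm[symmetric])
    qed
    thus ?thesis unfolding frob2 row_mult by simp
  qed
  have Q3: "Q ** (M ** P) = Q ** Xstar ** P" using QMP by (simp add: matrix_mul_assoc)
  have e1: "(frob_norm M)\<^sup>2 = (frob_norm (M ** P))\<^sup>2 + (frob_norm (Q ** Xstar ** P))\<^sup>2 + (frob_norm (Q ** Xstar ** Q))\<^sup>2"
    using d1 d2 PMQ QMQ PXQ by simp
  have e2: "(frob_norm (M ** P))\<^sup>2 \<ge> (frob_norm (Q ** Xstar ** P))\<^sup>2"
    using d3 Q3 by simp
  have "(frob_norm (M ** Vt))\<^sup>2 \<ge> 2/5 * (frob_norm M)\<^sup>2"
    using e1 e2 cb MV frob2_nonneg[of "Q ** Xstar ** Q"] by linarith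
  thus ?thesis unfolding M_def .
qed

end
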